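(* Let $N\ge2$ be an integer. For all $\sigma>0$ and all $x\in[1/N,1]$, \[\Bigl|\sum_{n=0}^\infty e^{-n/\sigma}\hat F^n\varphi_0(x)-S(\sigma)\Bigr|\le\frac{N(N-1)}{2},\qquad\text{where } S(\sigma):=\frac{1}{\log N}\sum_{n=0}^\infty e^{-n/\sigma}\lambda\bigl(F^{-n}[1/N,1]\bigr).\]
   Context: $\lambda$ is Lebesgue measure; $F$ is the Farey map, $F(x)=x/(1-x)$ for $0\le x\le1/2$, $F(x)=(1-x)/x$ for $1/2<x\le1$. $\hat F$ is the transfer operator of $F$ with respect to $d\mu=dx/x$, given by $\hat Ff(x)=\dfrac{f(x/(1+x))+x\,f(1/(1+x))}{1+x}$. $\varphi_0(x):=x$. *)

theory Defs
  imports "HOL-Analysis.Analysis"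
begin

definition farey :: "real \<Rightarrow> real" where
  "farey x = (if x \<le> 1/2 then x / (1 - x) else (1 - x) / x)"

text \<open>Transfer operator of the Farey map with respect to dx/x.\<close>
definition farey_transfer :: "(real \<Rightarrow> real) \<Rightarrow> (real \<Rightarrow> real)" where
  "farey_transfer f x = (f (x / (1 + x)) + x * f (1 / (1 + x))) / (1 + x)"

definition phi0 :: "real \<Rightarrow> real" where
  "phi0 x = x"

definition farey_preimage_measure :: "nat \<Rightarrow> nat \<Rightarrow> real" where
  "farey_preimage_measure N n =
     measure lborel {y \<in> {0..1}. (farey ^^ n) y \<in> {1 / real N..1}}"

definition S_sigma :: "nat \<Rightarrow> real \<Rightarrow> real" where
  "S_sigma N \<sigma> = (1 / ln (real N)) *
     (\<Sum>n. exp (- real n / \<sigma>) * farey_preimage_measure N n)"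

end

theory Submission imports Defs begin
lemma farey_meas[measurable]: "farey \<in> borel_measurable borel"
  unfolding farey_def by measurable
definition Pop :: "(real\<Rightarrow>real) \<Rightarrow> real \<Rightarrow> real" where
 "Pop r w = (r (w/(1+w)) + r (1/(1+w))) / (1+w)^2"
lemma Pop_meas[measurable]: assumes [measurable]: "r \<in> borel_measurable borel" shows "Pop r \<in> borel_measurable borel"
  unfolding Pop_def by measurable

lemma dual_step:
  assumes r[measurable]: "r \<in> borel_measurable borel" and rnn: "\<forall>x\<in>{0..1}. r x \<ge> 0"
  and G[measurable]: "G \<in> borel_measurable borel"
  shows "(\<integral>\<^sup>+z. indicator {0..1} z * ennreal (r z) * G (farey z) \<partial>lborel)
       = (\<integral>\<^sup>+w. indicator {0..1} w * ennreal (Pop r w) * G w \<partial>lborel)"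
proof -
  define f where "f = (\<lambda>z. ennreal (r z) * G (farey z))"
  have f_meas[measurable]: "f \<in> borel_measurable borel" unfolding f_def by measurable
  have split: "(\<integral>\<^sup>+z. indicator {0..1} z * ennreal (r z) * G (farey z) \<partial>lborel)
     = (\<integral>\<^sup>+z. f z * indicator {0..1/2} z \<partial>lborel) + (\<integral>\<^sup>+z. f z * indicator {1/2..1} z \<partial>lborel)"
  proof -
    have "(\<integral>\<^sup>+z. indicator {0..1} z * ennreal (r z) * G (farey z) \<partial>lborel)
        = (\<integral>\<^sup>+z. f z * indicator {0..1/2} z + f z * indicator {1/2..1} z \<partial>lborel)"
      apply (rule nn_integral_cong_AE)
      using AE_lborel_singleton[of "1/2"] by eventually_elim (auto simp: f_def split: split_indicator)
    also have "\<dots> = (\<integral>\<^sup>+z. f z * indicator {0..1/2} z \<partial>lborel) + (\<integral>\<^sup>+z. f z * indicator {1/2..1} z \<partial>lborel)"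
      by (rule nn_integral_add) auto
    finally show ?thesis .
  qed
  have b1: "(\<integral>\<^sup>+z. f z * indicator {0..1/2} z \<partial>lborel)
     = (\<integral>\<^sup>+w. ennreal (r (w/(1+w))) * G w * ennreal (1/(1+w)^2) * indicator {0..1} w \<partial>lborel)"
  proof -
    have "(\<integral>\<^sup>+z. f z * indicator {0..1/2} z \<partial>lborel)
        = (\<integral>\<^sup>+z. f z * indicator {(\<lambda>w::real. w/(1+w)) 0..(\<lambda>w::real. w/(1+w)) 1} z \<partial>lborel)" by simp
    also have "\<dots> = (\<integral>\<^sup>+w. f (w/(1+w)) * ennreal (1/(1+w)^2) * indicator {0..1} w \<partial>lborel)"
    proof (rule nn_integral_substitution_aux)
      show "((\<lambda>w. w/(1+w)) has_real_derivative 1/(1+x)^2) (at x)" if "x \<in> {0..1}" for x :: real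
        using that by (auto intro!: derivative_eq_intros simp: field_simps power2_eq_square)
      show "continuous_on {0..1} (\<lambda>x::real. 1/(1+x)^2)"
        by (intro continuous_intros) auto
    qed auto
    also have "\<dots> = (\<integral>\<^sup>+w. ennreal (r (w/(1+w))) * G w * ennreal (1/(1+w)^2) * indicator {0..1} w \<partial>lborel)"
    proof (rule nn_integral_cong)
      fix w :: real
      show "f (w/(1+w)) * ennreal (1/(1+w)^2) * indicator {0..1} w = ennreal (r (w/(1+w))) * G w * ennreal (1/(1+w)^2) * indicator {0..1} w"
      proof (cases "w \<in> {0..1}")
        case True
        then have "farey (w/(1+w)) = w" unfolding farey_def by (auto simp: field_simps)
        then show ?thesis by (simp add: f_def)
      qed simp
    qed
    finally show ?thesis .
  qed
  have b2: "(\<integral>\<^sup>+z. f z * indicator {1/2..1} z \<partial>lborel)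
     = (\<integral>\<^sup>+w. ennreal (r (1/(1+w))) * G w * ennreal (1/(1+w)^2) * indicator {0..1} w \<partial>lborel)"
  proof -
    have "(\<integral>\<^sup>+z. f z * indicator {1/2..1} z \<partial>lborel)
        = (\<integral>\<^sup>+z. f z * indicator {(\<lambda>u::real. 1/(2-u)) 0..(\<lambda>u::real. 1/(2-u)) 1} z \<partial>lborel)" by simp
    also have "\<dots> = (\<integral>\<^sup>+u. f (1/(2-u)) * ennreal (1/(2-u)^2) * indicator {0..1} u \<partial>lborel)"
    proof (rule nn_integral_substitution_aux)
      show "((\<lambda>u. 1/(2-u)) has_real_derivative 1/(2-x)^2) (at x)" if "x \<in> {0..1}" for x :: real
        using that by (auto intro!: derivative_eq_intros simp: field_simps power2_eq_square)
      show "continuous_on {0..1} (\<lambda>x::real. 1/(2-x)^2)"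
        by (intro continuous_intros) auto
    qed auto
    also have "\<dots> = ennreal \<bar>-1\<bar> * (\<integral>\<^sup>+w. f (1/(2-(1 + (-1)*w))) * ennreal (1/(2-(1 + (-1)*w))^2) * indicator {0..1} (1 + (-1)*w) \<partial>lborel)"
      by (rule nn_integral_real_affine) auto
    also have "\<dots> = (\<integral>\<^sup>+w. ennreal (r (1/(1+w))) * G w * ennreal (1/(1+w)^2) * indicator {0..1} w \<partial>lborel)"
    proof -
      have pw: "f (1/(2-(1 + (-1)*w))) * ennreal (1/(2-(1 + (-1)*w))^2) * indicator {0..1} (1 + (-1)*w) = ennreal (r (1/(1+w))) * G w * ennreal (1/(1+w)^2) * indicator {0..1} w" for w :: real
      proof (cases "w \<in> {0..1}")
        case True
        have e: "2 - (1 + (-1)*w) = 1 + w" by simp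
        from True have "farey (1/(1+w)) = w" unfolding farey_def by (auto simp: field_simps)
        then show ?thesis using True by (simp add: f_def e)
      qed (auto simp: split: split_indicator)
      show ?thesis by (simp only: pw) simp
    qed
    finally show ?thesis .
  qed
  have "(\<integral>\<^sup>+z. indicator {0..1} z * ennreal (r z) * G (farey z) \<partial>lborel)
     = (\<integral>\<^sup>+w. ennreal (r (w/(1+w))) * G w * ennreal (1/(1+w)^2) * indicator {0..1} w
          + ennreal (r (1/(1+w))) * G w * ennreal (1/(1+w)^2) * indicator {0..1} w \<partial>lborel)"
    unfolding split b1 b2 by (rule nn_integral_add[symmetric]) auto
  also have "\<dots> = (\<integral>\<^sup>+w. indicator {0..1} w * ennreal (Pop r w) * G w \<partial>lborel)"
  proof (rule nn_integral_cong)
    fix w :: real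
    show "ennreal (r (w/(1+w))) * G w * ennreal (1/(1+w)^2) * indicator {0..1} w
          + ennreal (r (1/(1+w))) * G w * ennreal (1/(1+w)^2) * indicator {0..1} w
        = indicator {0..1} w * ennreal (Pop r w) * G w"
    proof (cases "w \<in> {0..1}")
      case True
      have a: "r (w/(1+w)) \<ge> 0" "r (1/(1+w)) \<ge> 0" using rnn True by (auto simp: field_simps)
      have "ennreal (Pop r w) = (ennreal (r (w/(1+w))) + ennreal (r (1/(1+w)))) * ennreal (1/(1+w)^2)"
        unfolding Pop_def using a True by (simp add: ennreal_mult' ennreal_plus[symmetric] divide_inverse del: ennreal_plus)
      then show ?thesis using True by (simp add: algebra_simps)
    qed simp
  qed
  finally show ?thesis .
qed
lemma Pop_iter_meas[measurable]: assumes [measurable]: "r \<in> borel_measurable borel"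
  shows "(Pop^^n) r \<in> borel_measurable borel"
  by (induction n) auto

lemma Pop_nonneg: assumes "\<forall>x\<in>{0..1}. r x \<ge> (0::real)" shows "\<forall>x\<in>{0..1}. Pop r x \<ge> 0"
proof
  fix x :: real assume x: "x \<in> {0..1}"
  then have "x/(1+x) \<in> {0..1}" "1/(1+x) \<in> {0..1}" by (auto simp: field_simps)
  then show "Pop r x \<ge> 0" using assms x unfolding Pop_def by auto
qed

lemma Pop_iter_nonneg: assumes "\<forall>x\<in>{0..1}. r x \<ge> (0::real)" shows "\<forall>x\<in>{0..1}. (Pop^^n) r x \<ge> 0"
  using assms by (induction n) (auto intro: Pop_nonneg[rule_format])

lemma dual_iter:
  assumes r[measurable]: "r \<in> borel_measurable borel" and rnn: "\<forall>x\<in>{0..1}. r x \<ge> 0"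
  shows "G \<in> borel_measurable borel \<Longrightarrow> (\<integral>\<^sup>+z. indicator {0..1} z * ennreal (r z) * G ((farey^^n) z) \<partial>lborel)
       = (\<integral>\<^sup>+w. indicator {0..1} w * ennreal ((Pop^^n) r w) * G w \<partial>lborel)"
proof (induction n arbitrary: G)
  case 0
  then show ?case by simp
next
  case (Suc n)
  note [measurable] = Suc.prems
  have "(\<integral>\<^sup>+z. indicator {0..1} z * ennreal (r z) * G ((farey^^Suc n) z) \<partial>lborel)
      = (\<integral>\<^sup>+z. indicator {0..1} z * ennreal (r z) * (G \<circ> farey) ((farey^^n) z) \<partial>lborel)" by simp
  also have "\<dots> = (\<integral>\<^sup>+w. indicator {0..1} w * ennreal ((Pop^^n) r w) * G (farey w) \<partial>lborel)"
    by (subst Suc.IH) auto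
  also have "\<dots> = (\<integral>\<^sup>+w. indicator {0..1} w * ennreal (Pop ((Pop^^n) r) w) * G w \<partial>lborel)"
    by (rule dual_step) (auto simp: Pop_iter_nonneg[OF rnn])
  finally show ?case by simp
qed

lemma transfer_Pop: "farey_transfer (\<lambda>y. y * R y) x = x * Pop R x"
proof (cases "1 + x = 0")
  case True then show ?thesis by (simp add: farey_transfer_def Pop_def)
next
  case False
  define a where "a = R (x/(1+x))"
  define b where "b = R (1/(1+x))"
  have "x/(1+x) * a + x * (1/(1+x) * b) = x * (a + b) / (1+x)"
    by (simp add: add_divide_distrib algebra_simps)
  then have "(x/(1+x) * a + x * (1/(1+x) * b)) / (1+x) = x * ((a + b) / (1+x)^2)"
    by (simp add: power2_eq_square)
  then show ?thesis by (simp add: farey_transfer_def Pop_def a_def b_def)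
qed

lemma transfer_iter: "(farey_transfer^^n) phi0 = (\<lambda>x. x * (Pop^^n) (\<lambda>_. 1) x)"
proof (induction n)
  case 0 show ?case by (simp add: phi0_def fun_eq_iff)
next
  case (Suc n) show ?case by (simp add: Suc fun_eq_iff transfer_Pop)
qed

definition good :: "(real \<Rightarrow> real) \<Rightarrow> bool" where
 "good h \<longleftrightarrow> (\<forall>x\<in>{0..1}. 0 \<le> h x \<and> h x \<le> 1) \<and> (\<forall>x\<in>{0..1}. \<forall>y\<in>{0..1}. x \<le> y \<longrightarrow> h x \<le> h y)
   \<and> (\<forall>a\<in>{0..1}. \<forall>b\<in>{0..1}. \<forall>l\<in>{0..1}. l * h a + (1-l) * h b \<le> h (l*a + (1-l)*b))"

lemma good_phi0: "good phi0" unfolding good_def phi0_def by auto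

lemma convex_comb_01: assumes "(a::real) \<in> {0..1}" "b \<in> {0..1}" "l \<in> {0..1}"
  shows "l*a + (1-l)*b \<in> {0..1}"
proof -
  have "l*a \<le> l*1" using assms by (intro mult_left_mono) auto
  moreover have "(1-l)*b \<le> (1-l)*1" using assms by (intro mult_left_mono) auto
  moreover have "l*a \<ge> 0" "(1-l)*b \<ge> 0" using assms by auto
  ultimately show ?thesis by auto
qed

lemma frac_concave: assumes "(a::real) \<in> {0..1}" "b \<in> {0..1}" "l \<in> {0..1}"
  shows "l*(a/(1+a)) + (1-l)*(b/(1+b)) \<le> (l*a+(1-l)*b)/(1+(l*a+(1-l)*b))"
proof -
  define m where "m = l*a+(1-l)*b"
  have m: "m \<ge> 0" unfolding m_def using assms by auto
  define X where "X = l*a*(1+b) + (1-l)*b*(1+a)"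
  have D: "m*((1+a)*(1+b)) - X*(1+m) = l*(1-l)*(a-b)^2" unfolding m_def X_def by (simp add: algebra_simps power2_eq_square)
  have "l*(1-l)*(a-b)^2 \<ge> 0" using assms by auto
  then have cr: "X*(1+m) \<le> m*((1+a)*(1+b))" using D by linarith
  have e: "l*(a/(1+a)) + (1-l)*(b/(1+b)) = X/((1+a)*(1+b))" unfolding X_def using assms by (simp add: field_simps)
  have "X/((1+a)*(1+b)) \<le> m/(1+m)" using cr m assms by (simp add: divide_simps)
  then show ?thesis using e unfolding m_def by simp
qed

lemma good_step: assumes "good h" shows "good (farey_transfer h)"
proof -
  have bd: "\<And>x. x\<in>{0..1} \<Longrightarrow> 0 \<le> h x \<and> h x \<le> 1"
    and mo: "\<And>x y. x\<in>{0..1} \<Longrightarrow> y\<in>{0..1} \<Longrightarrow> x \<le> y \<Longrightarrow> h x \<le> h y"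
    and cc: "\<And>a b l. a\<in>{0..1} \<Longrightarrow> b\<in>{0..1} \<Longrightarrow> l\<in>{0..1} \<Longrightarrow> l * h a + (1-l) * h b \<le> h (l*a + (1-l)*b)"
    using assms unfolding good_def by auto
  define g where "g u = (1-u) * h u" for u
  define Gs where "Gs t = g t + g (1-t)" for t
  have gc: "l*g a + (1-l)*g b \<le> g (l*a+(1-l)*b)" if ab: "a\<in>{0..1}" "b\<in>{0..1}" "l\<in>{0..1}" for a b l
  proof -
    define c where "c = l*a+(1-l)*b"
    have c01: "c \<in> {0..1}" unfolding c_def by (rule convex_comb_01[OF ab])
    have hc: "l*h a + (1-l)*h b \<le> h c" unfolding c_def by (rule cc[OF ab])
    have "(1-c)*(l*h a+(1-l)*h b) \<le> (1-c)*h c" using c01 hc by (intro mult_left_mono) auto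
    moreover have pr: "(a-b)*(h a - h b) \<ge> 0"
    proof (cases "a \<le> b")
      case True then have "h a \<le> h b" using mo ab by auto
      then show ?thesis using True by (intro mult_nonpos_nonpos) auto
    next
      case False then have "h b \<le> h a" using mo ab by auto
      then show ?thesis using False by (intro mult_nonneg_nonneg) auto
    qed
    moreover have "l*(1-l) \<ge> 0" using ab by auto
    moreover have "(1-c)*(l*h a+(1-l)*h b) = l*g a + (1-l)*g b + l*(1-l)*((a-b)*(h a - h b))"
      unfolding c_def g_def by (simp add: algebra_simps)
    ultimately show ?thesis unfolding c_def g_def
      by (smt (verit) mult_nonneg_nonneg)
  qed
  have Gc: "l*Gs a + (1-l)*Gs b \<le> Gs (l*a+(1-l)*b)" if ab: "a\<in>{0..1}" "b\<in>{0..1}" "l\<in>{0..1}" for a b l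
  proof -
    have "1 - (l*a+(1-l)*b) = l*(1-a) + (1-l)*(1-b)" by (simp add: algebra_simps)
    moreover have "l*g (1-a) + (1-l)*g (1-b) \<le> g (l*(1-a)+(1-l)*(1-b))" using ab by (intro gc) auto
    ultimately show ?thesis using gc[OF ab] unfolding Gs_def by (simp add: algebra_simps)
  qed
  have Gm: "Gs s \<le> Gs t" if st: "0 \<le> s" "s \<le> t" "t \<le> 1/2" for s t
  proof (cases "s = 1/2")
    case True then have "t = s" using st by simp
    then show ?thesis by simp
  next
    case False
    define l :: real where "l = (1 - s - t) / (1 - 2 * s)"
    have pos: "1 - 2 * s > 0" using st False by auto
    have l01: "l \<in> {0..1}" unfolding l_def using st pos by (auto simp: field_simps)
    have e1: "l * (1 - 2 * s) = 1 - s - t" unfolding l_def using pos by simp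
    have teq: "l * s + (1-l)*(1-s) = t" using e1 by (simp add: algebra_simps)
    have "l*Gs s + (1-l)*Gs (1-s) \<le> Gs (l * s + (1-l)*(1-s))" using st l01 by (intro Gc) auto
    moreover have "Gs (1-s) = Gs s" unfolding Gs_def by simp
    moreover have "l*Gs s + (1-l)*Gs s = Gs s" by (simp add: algebra_simps)
    ultimately show ?thesis using teq by simp
  qed
  have ft: "farey_transfer h x = Gs (x/(1+x))" if "x \<ge> 0" for x
  proof -
    have e: "1 - x/(1+x) = 1/(1+x)" using that by (simp add: field_simps)
    have e2: "1 - (1 - x/(1+x)) = x/(1+x)" by simp
    define A where "A = h (x/(1+x))"
    define B where "B = h (1/(1+x))"
    have "(A + x * B) / (1+x) = (1/(1+x)) * A + x/(1+x) * B" by (simp add: add_divide_distrib)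
    then show ?thesis unfolding Gs_def g_def farey_transfer_def e2 unfolding e A_def B_def by simp
  qed
  have t01: "x/(1+x) \<in> {0..1/2}" if "x \<in> {0..1}" for x :: real
    using that by (auto simp: field_simps)
  have tmono: "x/(1+x) \<le> y/(1+y)" if "x \<in> {0..1}" "y \<in> {0..1}" "x \<le> y" for x y :: real
    using that by (simp add: field_simps)
  have "0 \<le> farey_transfer h x \<and> farey_transfer h x \<le> 1" if x: "x\<in>{0..1}" for x
  proof -
    define t where "t = x/(1+x)"
    have t: "t \<in> {0..1/2}" unfolding t_def using t01 x by auto
    have "h t \<in> {0..1}" "h (1-t) \<in> {0..1}" using bd t by auto
    then have "0 \<le> g t" "g t \<le> 1 - t" "0 \<le> g (1-t)" "g (1-t) \<le> t" unfolding g_def using t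
      by (auto intro: mult_nonneg_nonneg mult_left_le)
    then show ?thesis using ft[of x] x unfolding t_def Gs_def by auto
  qed
  moreover have "farey_transfer h x \<le> farey_transfer h y" if "x\<in>{0..1}" "y\<in>{0..1}" "x \<le> y" for x y
    using that ft[of x] ft[of y] Gm[of "x/(1+x)" "y/(1+y)"] t01[of x] t01[of y] tmono[of x y] by auto
  moreover have "l * farey_transfer h a + (1-l) * farey_transfer h b \<le> farey_transfer h (l*a + (1-l)*b)"
    if ab: "a\<in>{0..1}" "b\<in>{0..1}" "l\<in>{0..1}" for a b l
  proof -
    define m where "m = l*a+(1-l)*b"
    have m: "m \<in> {0..1}" unfolding m_def by (rule convex_comb_01[OF ab])
    have ta: "a/(1+a) \<in> {0..1/2}" "b/(1+b) \<in> {0..1/2}" "m/(1+m) \<in> {0..1/2}" using t01 ab m by auto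
    have cmb: "l*(a/(1+a)) + (1-l)*(b/(1+b)) \<in> {0..1}"
      using ta ab by (intro convex_comb_01) auto
    have cmb2: "l*(a/(1+a)) + (1-l)*(b/(1+b)) \<le> m/(1+m)" unfolding m_def by (rule frac_concave[OF ab])
    have "l*Gs (a/(1+a)) + (1-l)*Gs (b/(1+b)) \<le> Gs (l*(a/(1+a)) + (1-l)*(b/(1+b)))"
      using ta ab by (intro Gc) auto
    also have "\<dots> \<le> Gs (m/(1+m))" using cmb cmb2 ta by (intro Gm) auto
    finally show ?thesis using ft[of a] ft[of b] ft[of m] ab m unfolding m_def by auto
  qed
  ultimately show ?thesis unfolding good_def by blast
qed

lemma good_iter: "good ((farey_transfer^^n) phi0)"
  by (induction n) (auto intro: good_step good_phi0)

abbreviation HH :: "nat \<Rightarrow> real \<Rightarrow> real" where "HH n \<equiv> (farey_transfer^^n) phi0"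

lemma farey_iter_meas[measurable]: "(farey^^n) \<in> borel_measurable borel"
  by (induction n) auto

lemma integral_inv: assumes "N \<ge> (2::nat)"
  shows "(\<integral>\<^sup>+w. ennreal (indicator {1/real N..1} w * (1/w)) \<partial>lborel) = ennreal (ln (real N))"
proof -
  have N: "real N \<ge> 2" using assms by simp
  have "((\<lambda>w. 1/w) has_integral (ln 1 - ln (1/real N))) {1/real N..1}"
  proof (rule fundamental_theorem_of_calculus)
    show "1/real N \<le> 1" using N by simp
    show "(ln has_vector_derivative 1/x) (at x within {1/real N..1})" if "x \<in> {1/real N..1}" for x
    proof -
      have "x > 0" using that N by (auto intro: less_le_trans[of 0 "1/real N"])
      then have "(ln has_real_derivative 1/x) (at x)" by (auto intro!: derivative_eq_intros)
      then show ?thesis by (simp add: has_real_derivative_iff_has_vector_derivative[symmetric] has_field_derivative_at_within)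
    qed
  qed
  moreover have "ln 1 - ln (1/real N) = ln (real N)" using N by (simp add: ln_div)
  ultimately have hi: "((\<lambda>w. 1/w) has_integral ln (real N)) {1/real N..1}" by simp
  show ?thesis
  proof (rule nn_integral_has_integral_lebesgue[OF _ hi])
    fix x assume "x \<in> {1/real N..1}"
    then have "x > 0" using N by (auto intro: less_le_trans[of 0 "1/real N"])
    then show "0 \<le> 1/x" by simp
  qed
qed

lemma measure_bounds:
  assumes "N \<ge> (2::nat)"
  shows "ln (real N) * HH n (1/real N) \<le> farey_preimage_measure N n \<and> farey_preimage_measure N n \<le> ln (real N) * HH n 1"
proof -
  have N: "real N \<ge> 2" using assms by simp
  define R where "R = (Pop^^n) (\<lambda>_. 1)"
  have Rm[measurable]: "R \<in> borel_measurable borel" unfolding R_def by measurable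
  have HR: "HH n x = x * R x" for x unfolding R_def transfer_iter by simp
  have gd: "good (HH n)" by (rule good_iter)
  have mo: "HH n x \<le> HH n y" if "x\<in>{0..1}" "y\<in>{0..1}" "x \<le> y" for x y
    using gd that unfolding good_def by blast
  define A where "A = {y \<in> {0..1}. (farey^^n) y \<in> {1 / real N..1}}"
  have Am[measurable]: "A \<in> sets borel" unfolding A_def by measurable
  have "emeasure lborel A = (\<integral>\<^sup>+y. indicator A y \<partial>lborel)" using Am by simp
  also have "\<dots> = (\<integral>\<^sup>+y. indicator {0..1} y * ennreal ((\<lambda>_. 1) y) * indicator {1/real N..1} ((farey^^n) y) \<partial>lborel)"
    by (rule nn_integral_cong) (auto simp: A_def split: split_indicator)
  also have "\<dots> = (\<integral>\<^sup>+w. indicator {0..1} w * ennreal (R w) * indicator {1/real N..1} w \<partial>lborel)"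
    unfolding R_def by (rule dual_iter) auto
  finally have EA: "emeasure lborel A = (\<integral>\<^sup>+w. indicator {0..1} w * ennreal (R w) * indicator {1/real N..1} w \<partial>lborel)" .
  have pos: "w > 0" if "w \<in> {1/real N..1}" for w using that N by (auto intro: less_le_trans[of 0 "1/real N"])
  have N1: "1/real N \<in> {0..1}" using N by auto
  have up: "emeasure lborel A \<le> ennreal (HH n 1) * ennreal (ln (real N))"
  proof -
    have "emeasure lborel A \<le> (\<integral>\<^sup>+w. ennreal (HH n 1) * ennreal (indicator {1/real N..1} w * (1/w)) \<partial>lborel)"
      unfolding EA
    proof (rule nn_integral_mono)
      fix w :: real
      show "indicator {0..1} w * ennreal (R w) * indicator {1/real N..1} w \<le> ennreal (HH n 1) * ennreal (indicator {1/real N..1} w * (1/w))"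
      proof (cases "w \<in> {1/real N..1}")
        case True
        have w0: "w > 0" using pos True by blast
        have w01: "w \<in> {0..1}" using True w0 by auto
        have "R w = HH n w / w" using HR[of w] w0 by simp
        also have "\<dots> \<le> HH n 1 / w" using mo[of w 1] w01 w0 by (simp add: divide_right_mono)
        finally have "R w \<le> HH n 1 * (1/w)" by simp
        moreover have "HH n 1 \<ge> 0" using gd unfolding good_def by auto
        ultimately have "ennreal (R w) \<le> ennreal (HH n 1) * ennreal (1/w)"
          by (simp add: ennreal_mult'[symmetric] ennreal_leI)
        then show ?thesis using True w01 w0 by simp
      qed simp
    qed
    also have "\<dots> = ennreal (HH n 1) * ennreal (ln (real N))"
      using integral_inv[OF assms] by (simp add: nn_integral_cmult)
    finally show ?thesis .
  qed
  have lo: "ennreal (HH n (1/real N)) * ennreal (ln (real N)) \<le> emeasure lborel A"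
  proof -
    have "ennreal (HH n (1/real N)) * ennreal (ln (real N)) = (\<integral>\<^sup>+w. ennreal (HH n (1/real N)) * ennreal (indicator {1/real N..1} w * (1/w)) \<partial>lborel)"
      using integral_inv[OF assms] by (simp add: nn_integral_cmult)
    also have "\<dots> \<le> emeasure lborel A"
      unfolding EA
    proof (rule nn_integral_mono)
      fix w :: real
      show "ennreal (HH n (1/real N)) * ennreal (indicator {1/real N..1} w * (1/w)) \<le> indicator {0..1} w * ennreal (R w) * indicator {1/real N..1} w"
      proof (cases "w \<in> {1/real N..1}")
        case True
        have w0: "w > 0" using pos True by blast
        have w01: "w \<in> {0..1}" using True w0 by auto
        have "HH n (1/real N) / w \<le> HH n w / w" using mo[of "1/real N" w] w01 w0 N1 True by (simp add: divide_right_mono)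
        also have "\<dots> = R w" using HR[of w] w0 by simp
        finally have "HH n (1/real N) * (1/w) \<le> R w" by simp
        moreover have "HH n (1/real N) \<ge> 0" using gd N1 unfolding good_def by blast
        ultimately have "ennreal (HH n (1/real N)) * ennreal (1/w) \<le> ennreal (R w)"
          by (simp add: ennreal_mult'[symmetric] ennreal_leI)
        then show ?thesis using True w01 w0 by simp
      qed simp
    qed
    finally show ?thesis .
  qed
  have fin: "emeasure lborel A = ennreal (measure lborel A)"
    using up by (intro emeasure_eq_ennreal_measure) (auto simp: top_unique ennreal_mult_eq_top_iff)
  have h0: "HH n (1/real N) \<ge> 0" "HH n 1 \<ge> 0" using gd N1 unfolding good_def by auto
  have lnN: "ln (real N) \<ge> 0" using N by simp
  from up lo fin h0 lnN have "HH n (1/real N) * ln (real N) \<le> measure lborel A \<and> measure lborel A \<le> HH n 1 * ln (real N)"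
    by (simp add: ennreal_mult'[symmetric] ennreal_le_iff)
  then show ?thesis unfolding farey_preimage_measure_def A_def by (simp add: mult.commute)
qed

lemma summable_qb: fixes q :: real assumes q: "0 \<le> q" "q < 1" and b: "\<And>n. \<bar>a n\<bar> \<le> C"
  shows "summable (\<lambda>n. q^n * a n)"
proof (rule summable_comparison_test)
  show "\<exists>N. \<forall>n\<ge>N. norm (q^n * a n) \<le> C * q^n"
    using b q by (auto simp: abs_mult mult.commute intro!: mult_right_mono)
  show "summable (\<lambda>n. C * q^n)" using q by (intro summable_mult summable_geometric) auto
qed

lemma telescope: fixes q :: real assumes q: "0 \<le> q" "q < 1" and a: "\<And>n. 0 \<le> a n \<and> a n \<le> 1"
  shows "(\<Sum>n. q^n * (a n - a (Suc n))) \<le> a 0"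
proof -
  have ab: "\<bar>a n\<bar> \<le> 1" for n using a[of n] by auto
  have sS: "summable (\<lambda>n. q^n * a n)" by (rule summable_qb[OF q ab])
  have sT: "summable (\<lambda>n. q^n * a (Suc n))" by (rule summable_qb[OF q ab])
  have "(\<Sum>n. q^n * a n) = q^0 * a 0 + (\<Sum>n. q^(Suc n) * a (Suc n))"
    using suminf_split_head[OF sS] by simp
  also have "(\<Sum>n. q^(Suc n) * a (Suc n)) = q * (\<Sum>n. q^n * a (Suc n))"
    by (subst suminf_mult[OF sT, symmetric]) (simp add: mult.assoc)
  finally have S: "(\<Sum>n. q^n * a n) = a 0 + q * (\<Sum>n. q^n * a (Suc n))" by simp
  have T0: "(\<Sum>n. q^n * a (Suc n)) \<ge> 0" using sT q a by (intro suminf_nonneg) auto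
  have "(\<Sum>n. q^n * (a n - a (Suc n))) = (\<Sum>n. q^n * a n) - (\<Sum>n. q^n * a (Suc n))"
    using suminf_diff[OF sS sT] by (simp add: right_diff_distrib)
  also have "\<dots> \<le> a 0" using S T0 q by (simp add: algebra_simps mult_left_le_one_le)
  finally show ?thesis .
qed

lemma D_step:
  fixes H :: "nat \<Rightarrow> real \<Rightarrow> real" and q k :: real
  assumes q: "0 \<le> q" "q < 1" and k: "k \<ge> 1"
  and bd: "\<And>n x. x\<in>{0..1} \<Longrightarrow> 0 \<le> H n x \<and> H n x \<le> 1"
  and mo: "\<And>n x y. x\<in>{0..1} \<Longrightarrow> y\<in>{0..1} \<Longrightarrow> x \<le> y \<Longrightarrow> H n x \<le> H n y"
  and H0: "H 0 (1/k) = 1/k"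
  and rk: "\<And>n. (k+1) * H (Suc n) (1/k) = k * H n (1/(k+1)) + H n (k/(k+1))"
  shows "k * (\<Sum>n. q^n * (H n 1 - H n (1/(k+1)))) \<le> (k+1)/k + (k+1) * (\<Sum>n. q^n * (H n 1 - H n (1/k)))"
proof -
  define a where "a n = H n (1/k)" for n
  define b where "b n = H n (1/(k+1))" for n
  define c where "c n = H n 1" for n
  have p1: "1/k \<in> {0..1}" "1/(k+1) \<in> {0..1}" "k/(k+1) \<in> {0..1}" "(1::real) \<in> {0..1}" using k by auto
  have ba: "\<bar>a n\<bar> \<le> 1" "\<bar>b n\<bar> \<le> 1" "\<bar>c n\<bar> \<le> 1" for n
    unfolding a_def b_def c_def using bd p1 by (meson abs_le_iff order_trans neg_le_0_iff_le zero_le_one)+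
  have sa: "summable (\<lambda>n. q^n * a n)" and sb: "summable (\<lambda>n. q^n * b n)" and sc: "summable (\<lambda>n. q^n * c n)"
    and sa': "summable (\<lambda>n. q^n * a (Suc n))"
    by (rule summable_qb[OF q ba(1)] summable_qb[OF q ba(2)] summable_qb[OF q ba(3)] summable_qb[OF q ba(1)])+
  have dd: "(\<Sum>n. q^n * (f n - g n)) = (\<Sum>n. q^n * f n) - (\<Sum>n. q^n * g n)"
    if "summable (\<lambda>n. q^n * f n)" "summable (\<lambda>n. q^n * g n)" for f g :: "nat \<Rightarrow> real"
    using suminf_diff[OF that] by (simp add: right_diff_distrib)
  have pw: "q^n * (k * (a n - b n)) \<le> q^n * ((k+1) * (a n - a (Suc n)) + (c n - a n))" for n
  proof -
    have "H n (k/(k+1)) \<le> H n 1" using mo p1 k by auto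
    then have "k * (a n - b n) \<le> (k+1) * (a n - a (Suc n)) + (c n - a n)"
      using rk[of n] unfolding a_def b_def c_def by (simp add: algebra_simps)
    then show ?thesis using q by (intro mult_left_mono) auto
  qed
  have tel: "(\<Sum>n. q^n * (a n - a (Suc n))) \<le> 1/k"
    using telescope[OF q, of a] bd p1 unfolding a_def H0 by auto
  have s1: "summable (\<lambda>n. q^n * (k * (a n - b n)))"
    using summable_mult[OF summable_diff[OF sa sb], of k] by (simp add: algebra_simps)
  have sx: "summable (\<lambda>n. q^n * (a n - a (Suc n)))"
    using summable_diff[OF sa sa'] by (simp add: algebra_simps)
  have sy: "summable (\<lambda>n. q^n * (c n - a n))"
    using summable_diff[OF sc sa] by (simp add: algebra_simps)
  have s2: "summable (\<lambda>n. q^n * ((k+1) * (a n - a (Suc n)) + (c n - a n)))"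
    using summable_add[OF summable_mult[OF sx, of "k+1"] sy] by (simp add: algebra_simps)
  have "k * ((\<Sum>n. q^n * c n) - (\<Sum>n. q^n * b n)) = k * ((\<Sum>n. q^n * c n) - (\<Sum>n. q^n * a n)) + k * (\<Sum>n. q^n * (a n - b n))"
    unfolding dd[OF sa sb] by (simp add: algebra_simps)
  also have "k * (\<Sum>n. q^n * (a n - b n)) = (\<Sum>n. q^n * (k * (a n - b n)))"
    using suminf_mult[OF summable_diff[OF sa sb], of k] by (simp add: algebra_simps)
  also have "\<dots> \<le> (\<Sum>n. q^n * ((k+1) * (a n - a (Suc n)) + (c n - a n)))"
    by (rule suminf_le[OF pw s1 s2])
  also have "\<dots> = (k+1) * (\<Sum>n. q^n * (a n - a (Suc n))) + (\<Sum>n. q^n * (c n - a n))"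
    using suminf_add[OF summable_mult[OF sx, of "k+1"] sy] suminf_mult[OF sx, of "k+1"] by (simp add: algebra_simps)
  also have "\<dots> \<le> (k+1) * (1/k) + (\<Sum>n. q^n * (c n - a n))"
    using mult_left_mono[OF tel, of "k+1"] k by simp
  finally have "k * ((\<Sum>n. q^n * c n) - (\<Sum>n. q^n * b n)) \<le> k * ((\<Sum>n. q^n * c n) - (\<Sum>n. q^n * a n)) + (k+1)/k + ((\<Sum>n. q^n * c n) - (\<Sum>n. q^n * a n))"
    using dd[OF sc sa] by simp
  then show ?thesis unfolding a_def b_def c_def dd[OF sc[unfolded c_def] sb[unfolded b_def]] dd[OF sc[unfolded c_def] sa[unfolded a_def]]
    by (simp add: algebra_simps)
qed

lemma D_bound:
  fixes H :: "nat \<Rightarrow> real \<Rightarrow> real" and q :: real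
  assumes q: "0 \<le> q" "q < 1"
  and bd: "\<And>n x. x\<in>{0..1} \<Longrightarrow> 0 \<le> H n x \<and> H n x \<le> 1"
  and mo: "\<And>n x y. x\<in>{0..1} \<Longrightarrow> y\<in>{0..1} \<Longrightarrow> x \<le> y \<Longrightarrow> H n x \<le> H n y"
  and H0: "\<And>x. H 0 x = x"
  and r1: "\<And>n. H (Suc n) 1 = H n (1/2)"
  and rk: "\<And>n k. k \<ge> 1 \<Longrightarrow> (k+1) * H (Suc n) (1/k) = k * H n (1/(k+1)) + H n (k/(k+1))"
  shows "(\<Sum>n. q^n * (H n 1 - H n (1/real (m+2)))) \<le> real (m+2) * real (m+1) / 2"
proof (induction m)
  case 0
  define f where "f n = q^n * (H n 1 - H n (1/2))" for n
  have hp: "(1/2::real) \<in> {0..1}" "(1::real) \<in> {0..1}" by auto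
  have fb: "\<bar>H n 1 - H n (1/2)\<bar> \<le> 1" for n using bd[OF hp(1), of n] bd[OF hp(2), of n] by auto
  have sf: "summable f" unfolding f_def by (rule summable_qb[OF q fb])
  have fs: "f (Suc n) = q * (q^n * (H n (1/2) - H (Suc n) (1/2)))" for n unfolding f_def r1 by simp
  have ab: "\<bar>H n (1/2) - H (Suc n) (1/2)\<bar> \<le> 1" for n using bd[OF hp(1), of n] bd[OF hp(1), of "Suc n"] by auto
  have st: "summable (\<lambda>n. q^n * (H n (1/2) - H (Suc n) (1/2)))" by (rule summable_qb[OF q ab])
  have "(\<Sum>n. f (Suc n)) = q * (\<Sum>n. q^n * (H n (1/2) - H (Suc n) (1/2)))"
    unfolding fs by (rule suminf_mult[OF st])
  also have "\<dots> \<le> q * (1/2)"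
    using telescope[OF q, of "\<lambda>n. H n (1/2)"] bd[OF hp(1)] H0 q by (intro mult_left_mono) auto
  also have "\<dots> \<le> 1/2" using q by simp
  finally have "suminf f - f 0 \<le> 1/2" using suminf_split_head[OF sf] by simp
  moreover have "f 0 = 1/2" unfolding f_def H0 by simp
  ultimately have "suminf f \<le> 1" by simp
  then show ?case unfolding f_def by simp
next
  case (Suc m)
  define k where "k = real (m+2)"
  have k: "k \<ge> 2" unfolding k_def by simp
  have e1: "real (Suc m + 2) = k + 1" "real (Suc m + 1) = k" "real (m+1) = k - 1" unfolding k_def by simp_all
  have ds: "k * (\<Sum>n. q^n * (H n 1 - H n (1/(k+1)))) \<le> (k+1)/k + (k+1) * (\<Sum>n. q^n * (H n 1 - H n (1/k)))"
    using k by (intro D_step[OF q _ bd mo]) (auto simp: H0 intro: rk)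
  have IH: "(\<Sum>n. q^n * (H n 1 - H n (1/k))) \<le> k * (k-1) / 2" using Suc.IH unfolding k_def by simp
  have A: "(k+1) * (\<Sum>n. q^n * (H n 1 - H n (1/k))) \<le> (k+1) * (k * (k-1) / 2)"
    using IH k by (intro mult_left_mono) auto
  moreover have B: "(k+1)/k \<le> (k+1) * k / 2"
  proof -
    have "2 * 1 \<le> k * k" using mult_mono[OF k, of 1 k] k by simp
    then have "1/k \<le> k/2" using k by (simp add: field_simps)
    then have "(k+1) * (1/k) \<le> (k+1) * (k/2)" using k by (intro mult_left_mono) auto
    then show ?thesis by simp
  qed
  ultimately have "k * (\<Sum>n. q^n * (H n 1 - H n (1/(k+1)))) \<le> k * ((k+1) * k / 2)"
  proof -
    have "(k+1) * (k * (k-1) / 2) + (k+1) * k / 2 = k * ((k+1) * k / 2)" by (simp add: field_simps)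
    then show ?thesis using ds A B by linarith
  qed
  then have "(\<Sum>n. q^n * (H n 1 - H n (1/(k+1)))) \<le> (k+1) * k / 2" using k by simp
  then show ?case unfolding e1 by simp
qed

lemma HH_r1: "HH (Suc n) 1 = HH n (1/2)"
  by (simp add: farey_transfer_def)

lemma HH_rk: assumes "(k::real) \<ge> 1"
  shows "(k+1) * HH (Suc n) (1/k) = k * HH n (1/(k+1)) + HH n (k/(k+1))"
proof -
  have e1: "(1/k) / (1 + 1/k) = 1/(k+1)" and e2: "1 / (1 + 1/k) = k/(k+1)" and e3: "1 + 1/k = (k+1)/k"
    using assms by (simp_all add: field_simps)
  define A where "A = HH n (1/(k+1))"
  define B where "B = HH n (k/(k+1))"
  have k0: "k \<noteq> 0" "k + 1 \<noteq> 0" using assms by auto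
  have "(A + 1/k * B) * k = k * A + B" using k0 by (simp add: distrib_right)
  then have "(k+1) * ((A + 1/k * B) / ((k+1)/k)) = (k+1) * ((k * A + B) / (k+1))"
    by (simp only: divide_divide_eq_right)
  also have "\<dots> = k * A + B" using k0 by simp
  finally have Y: "(k+1) * ((A + 1/k * B) / ((k+1)/k)) = k * A + B" .
  have X: "HH (Suc n) (1/k) = (A + 1/k * B) / ((k+1)/k)"
  proof -
    have e1': "(1/k) / ((k+1)/k) = 1/(k+1)" and e2': "1 / ((k+1)/k) = k/(k+1)" using assms by (simp_all add: field_simps)
    show ?thesis by (subst funpow.simps(2), subst comp_apply, subst farey_transfer_def) (simp only: e1 e2 e3 e1' e2' A_def B_def)
  qed
  show ?thesis unfolding X Y unfolding A_def B_def ..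
qed

theorem lemma2:
  fixes N :: nat and \<sigma> x :: real
  assumes "N \<ge> 2" and "\<sigma> > 0" and "x \<in> {1 / real N..1}"
  shows "\<bar>(\<Sum>n. exp (- real n / \<sigma>) * (farey_transfer ^^ n) phi0 x) - S_sigma N \<sigma>\<bar>
           \<le> real N * (real N - 1) / 2"
proof -
  define q where "q = exp (- 1 / \<sigma>)"
  have q: "0 \<le> q" "q < 1" unfolding q_def using assms(2) by auto
  have eq: "exp (- real n / \<sigma>) = q^n" for n
    unfolding q_def using exp_of_nat_mult[of n "-1/\<sigma>"] by simp
  have N: "real N \<ge> 2" using assms by simp
  define L where "L = ln (real N)"
  have L: "L > 0" unfolding L_def using N by simp
  have N1: "1/real N \<in> {0..1}" using N by auto
  have "0 \<le> 1/real N" using N by simp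
  then have "0 \<le> x" using assms(3) by (meson atLeastAtMost_iff order_trans)
  then have x01: "x \<in> {0..1}" using assms(3) by auto
  have bd: "\<And>n x. x\<in>{0..1} \<Longrightarrow> 0 \<le> HH n x \<and> HH n x \<le> 1"
    and mo: "\<And>n x y. x\<in>{0..1} \<Longrightarrow> y\<in>{0..1} \<Longrightarrow> x \<le> y \<Longrightarrow> HH n x \<le> HH n y"
    using good_iter unfolding good_def by blast+
  define p where "p n = farey_preimage_measure N n / L" for n
  have pb: "HH n (1/real N) \<le> p n \<and> p n \<le> HH n 1" for n
    using measure_bounds[OF assms(1), of n] L unfolding p_def L_def by (simp add: field_simps)
  have hx: "HH n (1/real N) \<le> HH n x \<and> HH n x \<le> HH n 1" for n
    using mo[OF N1 x01, of n] mo[OF x01 _, of 1 n] assms(3) by auto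
  have b1: "\<bar>HH n x\<bar> \<le> 1" for n using bd[OF x01, of n] by auto
  have b2: "\<bar>p n\<bar> \<le> 1" for n using pb[of n] bd[OF N1, of n] bd[of 1 n] by auto
  have b3: "\<bar>HH n 1 - HH n (1/real N)\<bar> \<le> 1" for n using bd[OF N1, of n] bd[of 1 n] by auto
  have s1: "summable (\<lambda>n. q^n * HH n x)" by (rule summable_qb[OF q b1])
  have s2: "summable (\<lambda>n. q^n * p n)" by (rule summable_qb[OF q b2])
  have s3: "summable (\<lambda>n. q^n * (HH n 1 - HH n (1/real N)))" by (rule summable_qb[OF q b3])
  have S: "S_sigma N \<sigma> = (\<Sum>n. q^n * p n)"
  proof -
    have "(\<Sum>n. q^n * p n) = (\<Sum>n. (1/L) * (q^n * farey_preimage_measure N n))"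
      unfolding p_def by (simp add: field_simps)
    also have "\<dots> = (1/L) * (\<Sum>n. q^n * farey_preimage_measure N n)"
    proof (rule suminf_mult)
      have "summable (\<lambda>n. L * (q^n * p n))" by (rule summable_mult[OF s2])
      then show "summable (\<lambda>n. q^n * farey_preimage_measure N n)" unfolding p_def using L by simp
    qed
    finally show ?thesis unfolding S_sigma_def eq L_def by simp
  qed
  have "(\<Sum>n. exp (- real n / \<sigma>) * HH n x) - S_sigma N \<sigma> = (\<Sum>n. q^n * HH n x - q^n * p n)"
    unfolding eq S using suminf_diff[OF s1 s2] by simp
  then have "\<bar>(\<Sum>n. exp (- real n / \<sigma>) * HH n x) - S_sigma N \<sigma>\<bar> \<le> (\<Sum>n. q^n * (HH n 1 - HH n (1/real N)))"
  proof (simp only:)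
    show "\<bar>\<Sum>n. q^n * HH n x - q^n * p n\<bar> \<le> (\<Sum>n. q^n * (HH n 1 - HH n (1/real N)))"
    proof (rule norm_suminf_le[where 'a=real, unfolded real_norm_def, OF _ s3])
      fix n
      have "\<bar>HH n x - p n\<bar> \<le> HH n 1 - HH n (1/real N)" using hx[of n] pb[of n] by auto
      then have "q^n * \<bar>HH n x - p n\<bar> \<le> q^n * (HH n 1 - HH n (1/real N))" using q by (intro mult_left_mono) auto
      then show "\<bar>q^n * HH n x - q^n * p n\<bar> \<le> q^n * (HH n 1 - HH n (1/real N))"
        using q by (simp add: abs_mult right_diff_distrib[symmetric])
    qed
  qed
  also have "\<dots> \<le> real N * real (N - 1) / 2"
  proof -
    have H0: "\<And>x. HH 0 x = x" by (simp add: phi0_def)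
    have e: "N - 2 + 2 = N" "N - 2 + 1 = N - 1" using assms(1) by simp_all
    show ?thesis using D_bound[OF q bd mo H0 HH_r1 HH_rk, of "N-2", unfolded e] by simp
  qed
  also have "\<dots> = real N * (real N - 1) / 2" using assms(1) by (simp add: of_nat_diff)
  finally show ?thesis .
qed

end
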